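(* Consider the uplink system and problem in the context, with the antenna-moving-region constraints $0\le x_m\le x_{\max}$, $0\le y_n\le y_{\max}$ omitted, and suppose each user has a single channel path. If $K(K-1)/2\le I_M+I_N$, where $I_M$ and $I_N$ denote the total number of prime factors (counted with multiplicity) of $M$ and $N$ respectively, then the lower bound $p_k\ge\bar p_k:=\frac{\sigma^2(2^{r_k}-1)}{MN|b_k|^2}$ ($1\le k\le K$) valid for all feasible points is tight: there exist feasible $(\mathbf{x},\mathbf{y},\mathbf{W},\mathbf{p})$ with $p_k=\bar p_k$ for all $k$ (so the minimum total transmit power equals $\sum_k\bar p_k$).
   Context: A base station has a cross-linked movable antenna array with $M$ columns and $N$ rows; horizontal APV $\mathbf{x}=[x_1,\dots,x_M]^{\mathrm T}\in\mathbb{R}^M$, vertical APV $\mathbf{y}=[y_1,\dots,y_N]^{\mathrm T}\in\mathbb{R}^N$, antenna $(m,n)$ at $(x_m,y_n)$. $K$ single-antenna users; user $k$ has a single path with complex coefficient $b_k\ne0$ and virtual angles $\vartheta_k,\varphi_k\in[-1,1]$, where different users have distinct virtual angles: $\vartheta_k\ne\vartheta_q$ and $\varphi_k\ne\varphi_q$ for $k\ne q$. With wavelength $\lambda>0$, the channel is $\mathbf{h}_k(\mathbf{x},\mathbf{y})=b_k\,\mathbf{a}^{\mathrm{hor}}_k(\mathbf{x})\otimes\mathbf{a}^{\mathrm{ver}}_k(\mathbf{y})$, with $\mathbf{a}^{\mathrm{hor}}_k(\mathbf{x})=[e^{-\mathrm{j}\frac{2\pi}{\lambda}x_m\vartheta_k}]_{m=1}^M$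 and $\mathbf{a}^{\mathrm{ver}}_k(\mathbf{y})=[e^{-\mathrm{j}\frac{2\pi}{\lambda}y_n\varphi_k}]_{n=1}^N$. With combining matrix $\mathbf{W}=[\mathbf{w}_1,\dots,\mathbf{w}_K]\in\mathbb{C}^{MN\times K}$, powers $p_k$, noise power $\sigma^2>0$, the SINR of user $k$ is $\gamma_k=\frac{|\mathbf{w}_k^{\mathrm H}\mathbf{h}_k|^2p_k}{\sum_{q\ne k}|\mathbf{w}_k^{\mathrm H}\mathbf{h}_q|^2p_q+\|\mathbf{w}_k\|_2^2\sigma^2}$. Feasibility means: $\log_2(1+\gamma_k)\ge r_k$, $p_k\ge0$ for all $k$ (given $r_k\ge0$), $x_{m+1}-x_m\ge d_{\min,x}$ for $1\le m\le M-1$, $y_{n+1}-y_n\ge d_{\min,y}$ for $1\le n\le N-1$, with given $d_{\min,x},d_{\min,y}>0$. The objective is to minimize $\sum_k p_k$. *)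

theory Defs
  imports Complex_Main "HOL-Computational_Algebra.Primes"
begin

text \<open>Antenna (m,n), 0-based: m < M (column), n < N (row). Users k < K (0-based).
  Vectors in C^{MN} are indexed by pairs (m,n); the Kronecker ordering is irrelevant
  for inner products and norms.\<close>

definition chan :: "real \<Rightarrow> (nat \<Rightarrow> complex) \<Rightarrow> (nat \<Rightarrow> real) \<Rightarrow> (nat \<Rightarrow> real)
    \<Rightarrow> (nat \<Rightarrow> real) \<Rightarrow> (nat \<Rightarrow> real) \<Rightarrow> nat \<Rightarrow> nat \<times> nat \<Rightarrow> complex" where
  "chan lam b theta phi x y k mn =
     b k * cis (- 2 * pi / lam * x (fst mn) * theta k) * cis (- 2 * pi / lam * y (snd mn) * phi k)"

definition cinner :: "nat \<Rightarrow> nat \<Rightarrow> (nat \<times> nat \<Rightarrow> complex) \<Rightarrow> (nat \<times> nat \<Rightarrow> complex) \<Rightarrow> complex" where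
  "cinner M N w h = (\<Sum>m<M. \<Sum>n<N. cnj (w (m, n)) * h (m, n))"

definition cnormsq :: "nat \<Rightarrow> nat \<Rightarrow> (nat \<times> nat \<Rightarrow> complex) \<Rightarrow> real" where
  "cnormsq M N w = (\<Sum>m<M. \<Sum>n<N. (cmod (w (m, n)))\<^sup>2)"

definition sinr :: "nat \<Rightarrow> nat \<Rightarrow> nat \<Rightarrow> real \<Rightarrow> (nat \<Rightarrow> complex) \<Rightarrow> (nat \<Rightarrow> real) \<Rightarrow> (nat \<Rightarrow> real)
    \<Rightarrow> real \<Rightarrow> (nat \<Rightarrow> real) \<Rightarrow> (nat \<Rightarrow> real) \<Rightarrow> (nat \<Rightarrow> nat \<times> nat \<Rightarrow> complex)
    \<Rightarrow> (nat \<Rightarrow> real) \<Rightarrow> nat \<Rightarrow> real" where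
  "sinr M N K lam b theta phi sigma2 x y W p k =
     (cmod (cinner M N (W k) (chan lam b theta phi x y k)))\<^sup>2 * p k /
     ((\<Sum>q\<in>{..<K} - {k}. (cmod (cinner M N (W k) (chan lam b theta phi x y q)))\<^sup>2 * p q)
       + cnormsq M N (W k) * sigma2)"

definition feasible :: "nat \<Rightarrow> nat \<Rightarrow> nat \<Rightarrow> real \<Rightarrow> (nat \<Rightarrow> complex) \<Rightarrow> (nat \<Rightarrow> real) \<Rightarrow> (nat \<Rightarrow> real)
    \<Rightarrow> real \<Rightarrow> (nat \<Rightarrow> real) \<Rightarrow> real \<Rightarrow> real
    \<Rightarrow> (nat \<Rightarrow> real) \<Rightarrow> (nat \<Rightarrow> real) \<Rightarrow> (nat \<Rightarrow> nat \<times> nat \<Rightarrow> complex) \<Rightarrow> (nat \<Rightarrow> real) \<Rightarrow> bool" where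
  "feasible M N K lam b theta phi sigma2 r dminx dminy x y W p \<longleftrightarrow>
     (\<forall>k<K. log 2 (1 + sinr M N K lam b theta phi sigma2 x y W p k) \<ge> r k \<and> p k \<ge> 0) \<and>
     (\<forall>m. m + 1 < M \<longrightarrow> x (m + 1) - x m \<ge> dminx) \<and>
     (\<forall>n. n + 1 < N \<longrightarrow> y (n + 1) - y n \<ge> dminy)"

definition pbar :: "nat \<Rightarrow> nat \<Rightarrow> (nat \<Rightarrow> complex) \<Rightarrow> real \<Rightarrow> (nat \<Rightarrow> real) \<Rightarrow> nat \<Rightarrow> real" where
  "pbar M N b sigma2 r k = sigma2 * (2 powr r k - 1) / (real (M * N) * (cmod (b k))\<^sup>2)"

definition Omega :: "nat \<Rightarrow> nat" where
  "Omega n = size (prime_factorization n)"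

end

theory Submission
  imports Defs "HOL-Analysis.Convex"
begin

lemma dsum_prod: "(\<Sum>m<M. \<Sum>n<N. f (m, n)) = (\<Sum>mn\<in>{..<M}\<times>{..<N}. f mn)"
  by (simp add: sum.cartesian_product)

lemma cs_const:
  assumes "\<And>m n. cmod (h (m, n)) = c" "c \<ge> 0"
  shows "(cmod (cinner M N w h))\<^sup>2 \<le> cnormsq M N w * (real (M * N) * c\<^sup>2)"
proof -
  let ?I = "{..<M}\<times>{..<N}"
  have e: "cinner M N w h = (\<Sum>mn\<in>?I. cnj (w mn) * h mn)"
    unfolding cinner_def by (rule dsum_prod)
  have "cmod (cinner M N w h) \<le> (\<Sum>mn\<in>?I. cmod (w mn) * c)"
    unfolding e
    by (rule order_trans[OF norm_sum]) (use assms(1) in \<open>auto simp: norm_mult intro!: sum_mono\<close>)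
  also have "\<dots> = c * (\<Sum>mn\<in>?I. cmod (w mn))" by (simp add: sum_distrib_left mult.commute)
  finally have 1: "cmod (cinner M N w h) \<le> c * (\<Sum>mn\<in>?I. cmod (w mn))" .
  have "(cmod (cinner M N w h))\<^sup>2 \<le> (c * (\<Sum>mn\<in>?I. cmod (w mn)))\<^sup>2"
    by (rule power_mono[OF 1]) simp
  also have "\<dots> = c\<^sup>2 * (\<Sum>mn\<in>?I. cmod (w mn))\<^sup>2" by (simp add: power_mult_distrib)
  also have "\<dots> \<le> c\<^sup>2 * ((\<Sum>mn\<in>?I. (cmod (w mn))\<^sup>2) * card ?I)"
    by (rule mult_left_mono[OF sum_squared_le_sum_of_squares]) simp
  also have "\<dots> = cnormsq M N w * (real (M * N) * c\<^sup>2)"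
    unfolding cnormsq_def dsum_prod[where f="\<lambda>mn. (cmod (w mn))\<^sup>2"] by (simp add: card_cartesian_product)
  finally show ?thesis .
qed

lemma cmod_chan: "cmod (chan lam b theta phi x y k mn) = cmod (b k)"
  by (simp add: chan_def norm_mult)

lemma lower:
  assumes "M \<ge> 1" "N \<ge> 1" "sigma2 > 0" "b k \<noteq> 0" "k < K"
    and F: "feasible M N K lam b theta phi sigma2 r dminx dminy x y W p"
  shows "p k \<ge> pbar M N b sigma2 r k"
proof -
  let ?G = "real (M * N) * (cmod (b k))\<^sup>2"
  let ?num = "(cmod (cinner M N (W k) (chan lam b theta phi x y k)))\<^sup>2 * p k"
  let ?I = "(\<Sum>q\<in>{..<K} - {k}. (cmod (cinner M N (W k) (chan lam b theta phi x y q)))\<^sup>2 * p q)"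
  let ?S = "cnormsq M N (W k)"
  have pk: "p k \<ge> 0" and lg: "r k \<le> log 2 (1 + sinr M N K lam b theta phi sigma2 x y W p k)"
    using F assms(5) unfolding feasible_def by auto
  have I0: "?I \<ge> 0" using F unfolding feasible_def by (intro sum_nonneg) auto
  have S0: "?S \<ge> 0" unfolding cnormsq_def by (intro sum_nonneg) auto
  have cs: "(cmod (cinner M N (W k) (chan lam b theta phi x y k)))\<^sup>2 \<le> ?S * ?G"
    by (rule cs_const) (auto simp: cmod_chan)
  have Gpos: "?G > 0" using assms by simp
  have num0: "?num \<ge> 0" using pk by simp
  have numle: "?num \<le> ?S * ?G * p k" using cs pk by (simp add: mult_right_mono)
  have g: "sinr M N K lam b theta phi sigma2 x y W p k \<le> ?G * p k / sigma2"
  proof (cases "?S = 0")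
    case True
    then have "?num = 0" using numle num0 by simp
    then have "sinr M N K lam b theta phi sigma2 x y W p k = 0"
      unfolding sinr_def by (simp only: div_0)
    then show ?thesis using Gpos pk assms(3) by simp
  next
    case False
    then have Sp: "?S > 0" using S0 by simp
    have "sinr M N K lam b theta phi sigma2 x y W p k = ?num / (?I + ?S * sigma2)"
      unfolding sinr_def by simp
    also have "\<dots> \<le> ?num / (?S * sigma2)"
      by (rule divide_left_mono) (use num0 I0 Sp assms(3) in \<open>auto intro!: mult_pos_pos add_nonneg_pos\<close>)
    also have "\<dots> \<le> ?S * ?G * p k / (?S * sigma2)"
      by (rule divide_right_mono[OF numle]) (use Sp assms(3) in simp)
    also have "\<dots> = ?G * p k / sigma2" using Sp by simp
    finally show ?thesis .
  qed
  have s0: "sinr M N K lam b theta phi sigma2 x y W p k \<ge> 0"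
    unfolding sinr_def using num0 I0 S0 assms(3) by (intro divide_nonneg_nonneg) auto
  have "2 powr r k \<le> 1 + sinr M N K lam b theta phi sigma2 x y W p k"
    using lg s0 le_log_iff[of 2 "1 + sinr M N K lam b theta phi sigma2 x y W p k" "r k"] by simp
  then have "2 powr r k - 1 \<le> ?G * p k / sigma2" using g by simp
  then have "sigma2 * (2 powr r k - 1) \<le> ?G * p k" using assms(3) by (simp add: field_simps)
  then show ?thesis unfolding pbar_def using Gpos by (simp add: field_simps)
qed

lemma geom_pos:
  assumes "p \<ge> 2" "\<alpha> > 0"
  shows "\<exists>s\<ge>L. (\<Sum>b<p. cis (\<alpha> * (s * real b))) = 0"
proof -
  define j where "j = nat \<lceil>L * \<alpha> / (2 * pi)\<rceil>"
  define s where "s = 2 * pi * (1 + real p * real j) / (real p * \<alpha>)"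
  have pp: "real p > 0" using assms by simp
  have "L * \<alpha> / (2 * pi) \<le> real j" unfolding j_def by linarith
  then have "L * \<alpha> \<le> 2 * pi * real j" by (simp add: field_simps)
  also have "\<dots> \<le> 2 * pi * (1 + real p * real j) / real p"
    using pp by (simp add: field_simps)
  finally have "L \<le> s" unfolding s_def using assms pp by (simp add: field_simps)
  moreover have "(\<Sum>b<p. cis (\<alpha> * (s * real b))) = 0"
  proof -
    define z where "z = cis (\<alpha> * s)"
    have as: "\<alpha> * s = 2 * pi * (1 + real p * real j) / real p"
      unfolding s_def using assms pp by (simp add: field_simps)
    have e: "real p * (\<alpha> * s) = 2 * pi * real (1 + p * j)"
      unfolding as using pp by (simp add: field_simps)
    have zp: "z ^ p = 1"
      unfolding z_def DeMoivre e by (rule cis_multiple_2pi) simp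
    have z1: "z \<noteq> 1"
    proof
      assume "z = 1"
      then have "cos (\<alpha> * s) = 1" unfolding z_def by (metis cis.sel(1) one_complex.sel(1))
      then obtain n :: int where "\<alpha> * s = real_of_int n * 2 * pi" using cos_one_2pi_int by blast
      then have "2 * pi * (1 + real p * real j) = 2 * pi * (real_of_int n * real p)" using as pp
        by (simp add: field_simps)
      then have "1 + real p * real j = real_of_int n * real p"
        by (subst (asm) mult_left_cancel) simp_all
      then have "of_int (1 + int p * int j) = (of_int (n * int p) :: real)" by simp
      then have "1 + int p * int j = n * int p" by (simp only: of_int_eq_iff)
      then have "int p dvd 1" by (metis dvd_add_times_triv_right_iff dvd_triv_right mult.commute)
      then show False using assms by simp
    qed
    have "(\<Sum>b<p. cis (\<alpha> * (s * real b))) = (\<Sum>b<p. z ^ b)"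
      unfolding z_def DeMoivre by (simp add: algebra_simps)
    also have "\<dots> = 0" using z1 zp by (simp add: sum_gp_strict)
    finally show ?thesis .
  qed
  ultimately show ?thesis by blast
qed

lemma geom:
  assumes "p \<ge> 2" "\<alpha> \<noteq> 0"
  shows "\<exists>s\<ge>L. (\<Sum>b<p. cis (\<alpha> * (s * real b))) = 0"
proof (cases "\<alpha> > 0")
  case True then show ?thesis using geom_pos assms by blast
next
  case False
  then have "- \<alpha> > 0" using assms by simp
  then obtain s where s: "s \<ge> L" "(\<Sum>b<p. cis (- \<alpha> * (s * real b))) = 0"
    using geom_pos assms by blast
  have "(\<Sum>b<p. cis (\<alpha> * (s * real b))) = cnj (\<Sum>b<p. cis (- \<alpha> * (s * real b)))"
    by (simp add: cis_cnj)
  also have "\<dots> = 0" using s(2) by simp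
  finally show ?thesis using s(1) by blast
qed

lemma Omega_1: "Omega 1 = 0" by (simp add: Omega_def)

lemma Omega_mult_prime: "prime p \<Longrightarrow> n > 0 \<Longrightarrow> Omega (p * n) = Suc (Omega n)"
  unfolding Omega_def by (simp add: prime_factorization_mult prime_factorization_prime prime_gt_0_nat[THEN gr_implies_not0])

lemma sum_divmod:
  fixes p q :: nat
  assumes "q > 0"
  shows "(\<Sum>m<p*q. f (m mod q) (m div q)) = (\<Sum>b<p. \<Sum>a<q. f a b)"
proof -
  have "(\<Sum>m<p*q. f (m mod q) (m div q)) = (\<Sum>b<p. \<Sum>m\<in>{b*q..<b*q+q}. f (m mod q) (m div q))"
    by (rule sum.nat_group[symmetric])
  also have "\<dots> = (\<Sum>b<p. \<Sum>a<q. f a b)"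
  proof (rule sum.cong[OF refl])
    fix b
    have "(\<Sum>m\<in>{b*q..<b*q+q}. f (m mod q) (m div q)) = (\<Sum>m\<in>{0+b*q..<q+b*q}. f (m mod q) (m div q))"
      by (simp add: add.commute)
    also have "\<dots> = (\<Sum>a\<in>{0..<q}. f ((a + b*q) mod q) ((a + b*q) div q))"
      by (rule sum.shift_bounds_nat_ivl)
    also have "\<dots> = (\<Sum>a<q. f a b)"
      using assms by (intro sum.cong) auto
    finally show "(\<Sum>m\<in>{b*q..<b*q+q}. f (m mod q) (m div q)) = (\<Sum>a<q. f a b)" .
  qed
  finally show ?thesis .
qed

lemma array_exists:
  "n \<ge> 1 \<Longrightarrow> finite A \<Longrightarrow> 0 \<notin> A \<Longrightarrow> card A \<le> Omega n \<Longrightarrow> d > 0 \<Longrightarrow>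
   \<exists>x::nat\<Rightarrow>real. (\<forall>m. m + 1 < n \<longrightarrow> x (m + 1) - x m \<ge> d) \<and>
       (\<forall>\<alpha>\<in>A. (\<Sum>m<n. cis (\<alpha> * x m)) = 0)"
proof (induction n arbitrary: A rule: less_induct)
  case (less n)
  show ?case
  proof (cases "A = {}")
    case True
    show ?thesis by (rule exI[of _ "\<lambda>m. d * real m"]) (use True less.prems in \<open>auto simp: algebra_simps\<close>)
  next
    case False
    then obtain \<alpha> where al: "\<alpha> \<in> A" by blast
    have "card A > 0" using False less.prems by auto
    then have "Omega n > 0" using less.prems by linarith
    then have "n \<noteq> 1" using Omega_1 by (metis less_irrefl)
    then obtain p where p: "prime p" "p dvd n" using prime_factor_nat by blast
    then obtain q where nq: "n = p * q" by blast
    have p2: "p \<ge> 2" using p prime_ge_2_nat by blast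
    have q1: "q \<ge> 1" using nq less.prems by (cases q) auto
    have qn: "q < n" using nq p2 q1 by simp
    have Om: "Omega n = Suc (Omega q)" using nq p q1 Omega_mult_prime by simp
    define A' where "A' = A - {\<alpha>}"
    have cA: "card A' \<le> Omega q" unfolding A'_def using less.prems al Om by auto
    obtain x' where x': "\<forall>m. m + 1 < q \<longrightarrow> x' (m + 1) - x' m \<ge> d"
        "\<forall>\<beta>\<in>A'. (\<Sum>m<q. cis (\<beta> * x' m)) = 0"
      using less.IH[OF qn q1 _ _ cA less.prems(5)] less.prems unfolding A'_def by auto
    have a0: "\<alpha> \<noteq> 0" using al less.prems by auto
    obtain s where s: "s \<ge> x' (q - 1) - x' 0 + d" "(\<Sum>b<p. cis (\<alpha> * (s * real b))) = 0"
      using geom[OF p2 a0] by blast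
    define x where "x m = x' (m mod q) + s * real (m div q)" for m
    have sumx: "(\<Sum>m<n. cis (\<beta> * x m)) = (\<Sum>a<q. cis (\<beta> * x' a)) * (\<Sum>b<p. cis (\<beta> * (s * real b)))" for \<beta>
    proof -
      have "(\<Sum>m<n. cis (\<beta> * x m)) = (\<Sum>m<p*q. (\<lambda>a b. cis (\<beta> * x' a) * cis (\<beta> * (s * real b))) (m mod q) (m div q))"
        unfolding nq x_def by (simp add: cis_mult algebra_simps)
      also have "\<dots> = (\<Sum>b<p. \<Sum>a<q. cis (\<beta> * x' a) * cis (\<beta> * (s * real b)))"
        using q1 by (intro sum_divmod) simp
      also have "\<dots> = (\<Sum>a<q. cis (\<beta> * x' a)) * (\<Sum>b<p. cis (\<beta> * (s * real b)))"
        by (simp add: sum_product sum.swap[of _ "{..<p}"])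
      finally show ?thesis .
    qed
    have sp: "x (m + 1) - x m \<ge> d" if "m + 1 < n" for m
    proof (cases "Suc (m mod q) < q")
      case True
      then have "(m + 1) mod q = m mod q + 1" "(m + 1) div q = m div q"
        by (auto simp: mod_Suc div_Suc)
      then show ?thesis unfolding x_def using x'(1) True by auto
    next
      case False
      have "m mod q < q" using q1 by simp
      with False have mq: "Suc (m mod q) = q" by simp
      then have "(m + 1) mod q = 0" "(m + 1) div q = m div q + 1" "m mod q = q - 1"
        using q1 by (auto simp: mod_Suc div_Suc)
      then show ?thesis unfolding x_def using s(1) by (simp add: algebra_simps)
    qed
    show ?thesis
    proof (intro exI[of _ x] conjI allI impI ballI)
      fix m assume "m + 1 < n" then show "x (m + 1) - x m \<ge> d" by (rule sp)
    next
      fix \<beta> assume b: "\<beta> \<in> A"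
      show "(\<Sum>m<n. cis (\<beta> * x m)) = 0"
      proof (cases "\<beta> = \<alpha>")
        case True then show ?thesis using sumx s(2) by simp
      next
        case False then have "\<beta> \<in> A'" using b unfolding A'_def by auto
        then show ?thesis using sumx x'(2) by simp
      qed
    qed
  qed
qed

lemma card_pairs: "2 * card {(k, q). k < q \<and> q < (K::nat)} = K * (K - 1)"
proof (induction K)
  case 0 then show ?case by simp
next
  case (Suc K)
  have e: "{(k, q). k < q \<and> q < Suc K} = {(k, q). k < q \<and> q < K} \<union> ({..<K} \<times> {K})" by auto
  have f: "finite {(k, q). k < q \<and> q < (K::nat)}"
    by (rule finite_subset[of _ "{..<K} \<times> {..<K}"]) auto
  have "card {(k, q). k < q \<and> q < Suc K} = card {(k, q). k < q \<and> q < K} + K"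
    unfolding e by (subst card_Un_disjoint) (use f in auto)
  then show ?case using Suc by (cases K) (auto simp: algebra_simps)
qed

lemma chan_pt:
  "cnj (chan lam b theta phi x y k (m, n)) * chan lam b theta phi x y q (m, n) =
   cnj (b k) * b q * (cis (2 * pi / lam * (theta k - theta q) * x m) * cis (2 * pi / lam * (phi k - phi q) * y n))"
proof -
  have "cnj (chan lam b theta phi x y k (m, n)) * chan lam b theta phi x y q (m, n) =
     cnj (b k) * b q * (cis (- (- 2 * pi / lam * x m * theta k)) * cis (- 2 * pi / lam * x m * theta q)) *
       (cis (- (- 2 * pi / lam * y n * phi k)) * cis (- 2 * pi / lam * y n * phi q))"
    by (simp add: chan_def cis_cnj ac_simps)
  also have "\<dots> = cnj (b k) * b q * (cis (2 * pi / lam * (theta k - theta q) * x m) * cis (2 * pi / lam * (phi k - phi q) * y n))"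
  proof -
    have 1: "cis (- (- 2 * pi / lam * x m * theta k)) * cis (- 2 * pi / lam * x m * theta q) = cis (2 * pi / lam * (theta k - theta q) * x m)"
      unfolding cis_mult by (rule arg_cong[where f=cis]) (simp add: algebra_simps diff_divide_distrib)
    have 2: "cis (- (- 2 * pi / lam * y n * phi k)) * cis (- 2 * pi / lam * y n * phi q) = cis (2 * pi / lam * (phi k - phi q) * y n)"
      unfolding cis_mult by (rule arg_cong[where f=cis]) (simp add: algebra_simps diff_divide_distrib)
    show ?thesis unfolding 1 2 by (simp add: ac_simps)
  qed
  finally show ?thesis .
qed

lemma cinner_chan:
  "cinner M N (chan lam b theta phi x y k) (chan lam b theta phi x y q) =
   cnj (b k) * b q * ((\<Sum>m<M. cis (2 * pi / lam * (theta k - theta q) * x m)) *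
                      (\<Sum>n<N. cis (2 * pi / lam * (phi k - phi q) * y n)))"
proof -
  have "cnj (b k) * b q * ((\<Sum>m<M. cis (2 * pi / lam * (theta k - theta q) * x m)) *
                      (\<Sum>n<N. cis (2 * pi / lam * (phi k - phi q) * y n)))
    = cnj (b k) * b q * (\<Sum>m<M. \<Sum>n<N. cis (2 * pi / lam * (theta k - theta q) * x m) * cis (2 * pi / lam * (phi k - phi q) * y n))"
    by (simp only: sum_product)
  also have "\<dots> = (\<Sum>m<M. \<Sum>n<N. cnj (b k) * b q * (cis (2 * pi / lam * (theta k - theta q) * x m) * cis (2 * pi / lam * (phi k - phi q) * y n)))"
    by (simp only: sum_distrib_left)
  finally show ?thesis unfolding cinner_def chan_pt by simp
qed

lemma cnormsq_chan: "cnormsq M N (chan lam b theta phi x y k) = real (M * N) * (cmod (b k))\<^sup>2"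
  unfolding cnormsq_def cmod_chan by simp

lemma sum_neg_cnj:
  "(\<Sum>m<M. cis (a * (u - v) * x m)) = cnj (\<Sum>m<M. cis (a * (v - u) * (x m :: real)))"
  by (simp add: cis_cnj algebra_simps)

lemma alg: "(g::real) > 0 \<Longrightarrow> s > 0 \<Longrightarrow> g\<^sup>2 * (s * t / g) / (g * s) = t"
  by (simp add: field_simps power2_eq_square)

theorem theorem2:
  fixes M N K :: nat and lam sigma2 dminx dminy :: real
    and b :: "nat \<Rightarrow> complex" and theta phi r :: "nat \<Rightarrow> real"
  assumes "M \<ge> 1" and "N \<ge> 1" and "lam > 0" and "sigma2 > 0"
    and "dminx > 0" and "dminy > 0"
    and "\<forall>k<K. b k \<noteq> 0"
    and "\<forall>k<K. r k \<ge> 0"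
    and "\<forall>k<K. -1 \<le> theta k \<and> theta k \<le> 1 \<and> -1 \<le> phi k \<and> phi k \<le> 1"
    and "\<forall>k<K. \<forall>q<K. k \<noteq> q \<longrightarrow> theta k \<noteq> theta q \<and> phi k \<noteq> phi q"
    and "real K * (real K - 1) / 2 \<le> real (Omega M + Omega N)"
  shows "(\<forall>x y W p. feasible M N K lam b theta phi sigma2 r dminx dminy x y W p
            \<longrightarrow> (\<forall>k<K. p k \<ge> pbar M N b sigma2 r k))
       \<and> (\<exists>x y W p. feasible M N K lam b theta phi sigma2 r dminx dminy x y W p
            \<and> (\<forall>k<K. p k = pbar M N b sigma2 r k))"
proof (intro conjI allI impI)
  fix x y W p k
  assume "feasible M N K lam b theta phi sigma2 r dminx dminy x y W p" "k < K"
  then show "p k \<ge> pbar M N b sigma2 r k"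
    using lower assms by blast
next
  define P where "P = {(k, q). k < q \<and> q < (K::nat)}"
  have finP: "finite P" unfolding P_def
    by (rule finite_subset[of _ "{..<K} \<times> {..<K}"]) auto
  have "real (2 * card P) = real (K * (K - 1))" unfolding P_def card_pairs ..
  then have "real (card P) = real K * (real K - 1) / 2"
    by (cases K) (auto simp: of_nat_diff algebra_simps)
  then have cP: "card P \<le> Omega M + Omega N" using assms(11) by linarith
  obtain P1 where P1: "P1 \<subseteq> P" "card P1 = min (Omega M) (card P)" "finite P1"
    using obtain_subset_with_card_n[of "min (Omega M) (card P)" P] by auto
  define P2 where "P2 = P - P1"
  have cP2: "card P2 \<le> Omega N" unfolding P2_def using P1 finP cP
    by (simp add: card_Diff_subset)
  have finP2: "finite P2" unfolding P2_def using finP by simp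
  define Ax where "Ax = (\<lambda>(k, q). 2 * pi / lam * (theta k - theta q)) ` P1"
  define Ay where "Ay = (\<lambda>(k, q). 2 * pi / lam * (phi k - phi q)) ` P2"
  have "card Ax \<le> Omega M" unfolding Ax_def using card_image_le[OF P1(3)] P1(2) by fastforce
  moreover have "0 \<notin> Ax" unfolding Ax_def using P1(1) assms(3,10) by (auto simp: P_def)
  moreover have "finite Ax" unfolding Ax_def using P1(3) by simp
  ultimately obtain x where x: "\<forall>m. m + 1 < M \<longrightarrow> x (m + 1) - x m \<ge> dminx"
      "\<forall>\<alpha>\<in>Ax. (\<Sum>m<M. cis (\<alpha> * x m)) = 0"
    using array_exists[OF assms(1) _ _ _ assms(5)] by blast
  have "card Ay \<le> Omega N" unfolding Ay_def using card_image_le[OF finP2, of "\<lambda>(k, q). 2 * pi / lam * (phi k - phi q)"] cP2 by linarith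
  moreover have "0 \<notin> Ay" unfolding Ay_def P2_def using assms(3,10) by (auto simp: P_def)
  moreover have "finite Ay" unfolding Ay_def using finP2 by simp
  ultimately obtain y where y: "\<forall>n. n + 1 < N \<longrightarrow> y (n + 1) - y n \<ge> dminy"
      "\<forall>\<alpha>\<in>Ay. (\<Sum>n<N. cis (\<alpha> * y n)) = 0"
    using array_exists[OF assms(2) _ _ _ assms(6)] by blast
  define SX where "SX k q = (\<Sum>m<M. cis (2 * pi / lam * (theta k - theta q) * x m))" for k q
  define SY where "SY k q = (\<Sum>n<N. cis (2 * pi / lam * (phi k - phi q) * y n))" for k q
  have lt: "SX k q = 0 \<or> SY k q = 0" if "k < q" "q < K" for k q
  proof -
    have kq: "(k, q) \<in> P" using that by (simp add: P_def)
    show ?thesis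
    proof (cases "(k, q) \<in> P1")
      case True
      then have "2 * pi / lam * (theta k - theta q) \<in> Ax" unfolding Ax_def by force
      then show ?thesis using x(2) unfolding SX_def by auto
    next
      case False
      then have "(k, q) \<in> P2" using kq unfolding P2_def by simp
      then have "2 * pi / lam * (phi k - phi q) \<in> Ay" unfolding Ay_def by force
      then show ?thesis using y(2) unfolding SY_def by auto
    qed
  qed
  have zero: "SX k q = 0 \<or> SY k q = 0" if "k < K" "q < K" "k \<noteq> q" for k q
  proof (cases "k < q")
    case True then show ?thesis using lt that by blast
  next
    case False
    then have "q < k" using that by simp
    then have "SX q k = 0 \<or> SY q k = 0" using lt that by blast
    moreover have "SX k q = cnj (SX q k)" "SY k q = cnj (SY q k)"
      unfolding SX_def SY_def by (rule sum_neg_cnj)+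
    ultimately show ?thesis by auto
  qed
  define W where "W = chan lam b theta phi x y"
  define p where "p = pbar M N b sigma2 r"
  have inner0: "cinner M N (W k) (chan lam b theta phi x y q) = 0"
    if "k < K" "q < K" "k \<noteq> q" for k q
    unfolding W_def cinner_chan using zero[OF that] unfolding SX_def SY_def by auto
  have sinr_eq: "sinr M N K lam b theta phi sigma2 x y W p k = 2 powr r k - 1" if k: "k < K" for k
  proof -
    have bk: "b k \<noteq> 0" using assms(7) k by simp
    have I: "(\<Sum>q\<in>{..<K} - {k}. (cmod (cinner M N (W k) (chan lam b theta phi x y q)))\<^sup>2 * p q) = 0"
      using inner0 k by (intro sum.neutral) auto
    have "cinner M N (W k) (chan lam b theta phi x y k) = cnj (b k) * b k * (of_nat M * of_nat N)"
      unfolding W_def cinner_chan by simp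
    then have c: "cmod (cinner M N (W k) (chan lam b theta phi x y k)) = (cmod (b k))\<^sup>2 * real (M * N)"
      by (simp add: norm_mult power2_eq_square)
    have G: "real (M * N) * (cmod (b k))\<^sup>2 > 0" using assms(1,2) bk by simp
    have "sinr M N K lam b theta phi sigma2 x y W p k =
       ((cmod (b k))\<^sup>2 * real (M * N))\<^sup>2 * p k / (real (M * N) * (cmod (b k))\<^sup>2 * sigma2)"
      unfolding sinr_def I c by (simp add: W_def cnormsq_chan)
    also have "\<dots> = (real (M * N) * (cmod (b k))\<^sup>2)\<^sup>2 * (sigma2 * (2 powr r k - 1) / (real (M * N) * (cmod (b k))\<^sup>2)) / (real (M * N) * (cmod (b k))\<^sup>2 * sigma2)"
      unfolding p_def pbar_def by (simp add: ac_simps)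
    also have "\<dots> = 2 powr r k - 1"
      using alg[OF G assms(4)] .
    finally show ?thesis .
  qed
  have "feasible M N K lam b theta phi sigma2 r dminx dminy x y W p"
    unfolding feasible_def
  proof (intro conjI allI impI)
    fix k assume k: "k < K"
    show "r k \<le> log 2 (1 + sinr M N K lam b theta phi sigma2 x y W p k)"
      using sinr_eq[OF k] by simp
    have "2 powr r k \<ge> 1" using assms(8) k by (simp add: ge_one_powr_ge_zero)
    then show "p k \<ge> 0" unfolding p_def pbar_def using assms(4) by simp
  qed (use x y in auto)
  then show "\<exists>x y W p. feasible M N K lam b theta phi sigma2 r dminx dminy x y W p
            \<and> (\<forall>k<K. p k = pbar M N b sigma2 r k)"
    unfolding p_def by blast
qed

end
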